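(* For every $\varepsilon > 0$, there exists a set of squares of total area $\frac{8}{5} + \varepsilon$ that cannot be packed into the unit disk (the disk of radius $1$).
   Context: A packing of a set of squares into a container is a placement of congruent copies of the squares (translations and rotations allowed) inside the container such that the interiors of any two placed squares are disjoint. *)

theory Defs
  imports "HOL-Analysis.Analysis"
begin

definition placed_square :: "real \<Rightarrow> complex \<Rightarrow> real \<Rightarrow> complex set" where
  "placed_square s c \<theta> =
     {c + cis \<theta> * Complex u v | u v. \<bar>u\<bar> \<le> s / 2 \<and> \<bar>v\<bar> \<le> s / 2}"

definition packs_into :: "real list \<Rightarrow> complex set \<Rightarrow> bool" where
  "packs_into ss K \<longleftrightarrow>
     (\<exists>c :: nat \<Rightarrow> complex. \<exists>\<theta> :: nat \<Rightarrow> real.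
        (\<forall>i < length ss. placed_square (ss ! i) (c i) (\<theta> i) \<subseteq> K) \<and>
        (\<forall>i < length ss. \<forall>j < length ss. i \<noteq> j \<longrightarrow>
            interior (placed_square (ss ! i) (c i) (\<theta> i)) \<inter>
            interior (placed_square (ss ! j) (c j) (\<theta> j)) = {}))"

definition total_area :: "real list \<Rightarrow> real" where
  "total_area ss = (\<Sum>s\<leftarrow>ss. s ^ 2)"

end

theory Submission
  imports Defs
begin

lemma core:
  fixes qx qy \<alpha> \<beta> h :: real
  assumes ab: "\<alpha>\<^sup>2 + \<beta>\<^sup>2 = 1" and a1: "\<alpha> \<ge> \<beta>" and a2: "\<alpha> \<ge> - \<beta>" and h0: "h \<ge> 0"
  and H: "\<And>\<sigma> \<tau>. \<sigma> \<in> {-1,1} \<Longrightarrow> \<tau> \<in> {-1,1} \<Longrightarrow>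
     qx + \<alpha>*\<sigma>*h - \<beta>*\<tau>*h \<ge> 0 \<and>
     (qx + \<alpha>*\<sigma>*h - \<beta>*\<tau>*h)\<^sup>2 + (qy + \<beta>*\<sigma>*h + \<alpha>*\<tau>*h)\<^sup>2 \<le> 1"
  shows "5*h\<^sup>2 \<le> 1"
proof -
  have d1: "(qx + \<alpha>*h - \<beta>*h)\<^sup>2 + (qy + \<beta>*h + \<alpha>*h)\<^sup>2 \<le> 1" using H[of 1 1] by simp
  have d2: "(qx + \<alpha>*h + \<beta>*h)\<^sup>2 + (qy + \<beta>*h - \<alpha>*h)\<^sup>2 \<le> 1" using H[of 1 "-1"] by simp
  have r1: "qx - \<alpha>*h - \<beta>*h \<ge> 0" using H[of "-1" 1] by simp
  have r2: "qx - \<alpha>*h + \<beta>*h \<ge> 0" using H[of "-1" "-1"] by simp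
  have id: "(qx + \<alpha>*h - \<beta>*h)\<^sup>2 + (qy + \<beta>*h + \<alpha>*h)\<^sup>2 + ((qx + \<alpha>*h + \<beta>*h)\<^sup>2 + (qy + \<beta>*h - \<alpha>*h)\<^sup>2)
     = 2*((qx+\<alpha>*h)\<^sup>2 + (qy+\<beta>*h)\<^sup>2) + 2*h\<^sup>2*(\<alpha>\<^sup>2+\<beta>\<^sup>2)"
    by (simp add: power2_eq_square algebra_simps)
  have A: "(qx+\<alpha>*h)\<^sup>2 + (qy+\<beta>*h)\<^sup>2 + h\<^sup>2 \<le> 1"
    using d1 d2 id ab by simp
  have B: "qx + \<alpha>*h \<ge> (2*\<alpha> + \<bar>\<beta>\<bar>)*h" using r1 r2 by (cases "\<beta> \<ge> 0") (auto simp: algebra_simps)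
  have C0: "(2*\<alpha> + \<bar>\<beta>\<bar>)\<^sup>2 \<ge> 4"
  proof -
    have "(2*\<alpha> + \<bar>\<beta>\<bar>)\<^sup>2 - 4*(\<alpha>\<^sup>2 + \<beta>\<^sup>2) = \<bar>\<beta>\<bar> * (4*\<alpha> - 3*\<bar>\<beta>\<bar>)"
      by (simp add: power2_eq_square algebra_simps)
    moreover have "\<bar>\<beta>\<bar> * (4*\<alpha> - 3*\<bar>\<beta>\<bar>) \<ge> 0" using a1 a2 by (intro mult_nonneg_nonneg) auto
    ultimately have "(2*\<alpha> + \<bar>\<beta>\<bar>)\<^sup>2 - 4*1 \<ge> 0" using ab by simp
    then show ?thesis by simp
  qed
  have nn: "(2*\<alpha> + \<bar>\<beta>\<bar>)*h \<ge> 0" using a1 a2 h0 by (intro mult_nonneg_nonneg) auto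
  have "((2*\<alpha> + \<bar>\<beta>\<bar>)*h)\<^sup>2 \<le> (qx+\<alpha>*h)\<^sup>2" using B nn by (intro power_mono) auto
  moreover have "((2*\<alpha> + \<bar>\<beta>\<bar>)*h)\<^sup>2 \<ge> 4*h\<^sup>2"
    using C0 by (simp add: power_mult_distrib mult_right_mono zero_le_power2)
  ultimately show ?thesis using A by (smt (verit) zero_le_power2)
qed


lemma core2:
  fixes qx qy \<alpha> \<beta> h :: real
  assumes ab: "\<alpha>\<^sup>2 + \<beta>\<^sup>2 = 1" and h0: "h \<ge> 0"
  and H: "\<And>\<sigma> \<tau>. \<sigma> \<in> {-1,1} \<Longrightarrow> \<tau> \<in> {-1,1} \<Longrightarrow>
     qx + \<alpha>*\<sigma>*h - \<beta>*\<tau>*h \<ge> 0 \<and>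
     (qx + \<alpha>*\<sigma>*h - \<beta>*\<tau>*h)\<^sup>2 + (qy + \<beta>*\<sigma>*h + \<alpha>*\<tau>*h)\<^sup>2 \<le> 1"
  shows "5*h\<^sup>2 \<le> 1"
proof -
  have neg: "- x \<in> {-1,1::real}" if "x \<in> {-1,1}" for x using that by auto
  consider "\<alpha> \<ge> \<bar>\<beta>\<bar>" | "-\<alpha> \<ge> \<bar>\<beta>\<bar>" | "\<beta> \<ge> \<bar>\<alpha>\<bar>" | "-\<beta> \<ge> \<bar>\<alpha>\<bar>" by linarith
  then show ?thesis
  proof cases
    case 1
    then show ?thesis using core[OF ab _ _ h0 H] by auto
  next
    case 2
    show ?thesis
    proof (rule core[of "-\<alpha>" "-\<beta>" h qx qy])
      fix \<sigma> \<tau> :: real assume "\<sigma> \<in> {-1,1}" "\<tau> \<in> {-1,1}"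
      from H[OF neg[OF this(1)] neg[OF this(2)]]
      show "qx + - \<alpha> * \<sigma> * h - - \<beta> * \<tau> * h \<ge> 0 \<and>
        (qx + - \<alpha> * \<sigma> * h - - \<beta> * \<tau> * h)\<^sup>2 + (qy + - \<beta> * \<sigma> * h + - \<alpha> * \<tau> * h)\<^sup>2 \<le> 1"
        by (simp add: algebra_simps)
    qed (use 2 ab h0 in auto)
  next
    case 3
    show ?thesis
    proof (rule core[of "\<beta>" "-\<alpha>" h qx qy])
      fix \<sigma> \<tau> :: real assume "\<sigma> \<in> {-1,1}" "\<tau> \<in> {-1,1}"
      from H[OF this(2) neg[OF this(1)]]
      show "qx + \<beta> * \<sigma> * h - - \<alpha> * \<tau> * h \<ge> 0 \<and>
        (qx + \<beta> * \<sigma> * h - - \<alpha> * \<tau> * h)\<^sup>2 + (qy + - \<alpha> * \<sigma> * h + \<beta> * \<tau> * h)\<^sup>2 \<le> 1"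
        by (simp add: algebra_simps)
    qed (use 3 ab h0 in auto)
  next
    case 4
    show ?thesis
    proof (rule core[of "-\<beta>" "\<alpha>" h qx qy])
      fix \<sigma> \<tau> :: real assume "\<sigma> \<in> {-1,1}" "\<tau> \<in> {-1,1}"
      from H[OF neg[OF this(2)] this(1)]
      show "qx + - \<beta> * \<sigma> * h - \<alpha> * \<tau> * h \<ge> 0 \<and>
        (qx + - \<beta> * \<sigma> * h - \<alpha> * \<tau> * h)\<^sup>2 + (qy + \<alpha> * \<sigma> * h + - \<beta> * \<tau> * h)\<^sup>2 \<le> 1"
        by (simp add: algebra_simps)
    qed (use 4 ab h0 in auto)
  qed
qed

definition obox :: "real \<Rightarrow> complex \<Rightarrow> real \<Rightarrow> complex set" where
  "obox s c \<theta> = {c + cis \<theta> * Complex u v | u v. \<bar>u\<bar> < s / 2 \<and> \<bar>v\<bar> < s / 2}"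

lemma half_fixed:
  assumes h1: "0 < h'" and h2: "h' < s/2" and sub: "placed_square s c \<theta> \<subseteq> cball 0 1"
    and a0: "a \<noteq> 0" and pos: "\<forall>x\<in>obox s c \<theta>. inner a x \<ge> 0"
  shows "5*h'\<^sup>2 \<le> 1"
proof -
  define r where "r = cnj a / of_real (cmod a)"
  define p where "p = r * cis \<theta>"
  define q where "q = r * c"
  have cr: "cmod r = 1" using a0 by (simp add: r_def norm_divide)
  have "cmod p = 1" using cr by (simp add: p_def norm_mult)
  hence cp: "(Re p)\<^sup>2 + (Im p)\<^sup>2 = 1" using cmod_power2[of p] by simp
  show ?thesis
  proof (rule core2[OF cp, of h' "Re q" "Im q"])
    show "0 \<le> h'" using h1 by simp
    fix \<sigma> \<tau> :: real assume st: "\<sigma> \<in> {-1,1}" "\<tau> \<in> {-1,1}"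
    define x where "x = c + cis \<theta> * Complex (\<sigma>*h') (\<tau>*h')"
    have ab: "\<bar>\<sigma>*h'\<bar> = h'" "\<bar>\<tau>*h'\<bar> = h'" using st h1 by auto
    have "x \<in> obox s c \<theta>" unfolding obox_def x_def using ab h2 by auto
    hence ix: "inner a x \<ge> 0" using pos by auto
    have "x \<in> placed_square s c \<theta>" unfolding placed_square_def x_def using ab h2
      by (intro CollectI exI[of _ "\<sigma>*h'"] exI[of _ "\<tau>*h'"]) auto
    hence nx: "cmod x \<le> 1" using sub by auto
    have rx: "r * x = q + p * Complex (\<sigma>*h') (\<tau>*h')"
      unfolding x_def p_def q_def by (simp add: algebra_simps)
    have "Re (r * x) = inner a x / cmod a"
      unfolding r_def by (simp add: inner_complex_def)
    hence "Re (r * x) \<ge> 0" using ix by simp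
    moreover have "cmod (r * x) \<le> 1" using nx cr by (simp add: norm_mult)
    hence "(Re (r*x))\<^sup>2 + (Im (r*x))\<^sup>2 \<le> 1" using cmod_power2[of "r*x"]
      by (metis abs_norm_cancel abs_square_le_1)
    ultimately show "Re q + Re p * \<sigma> * h' - Im p * \<tau> * h' \<ge> 0 \<and>
     (Re q + Re p * \<sigma> * h' - Im p * \<tau> * h')\<^sup>2 + (Im q + Im p * \<sigma> * h' + Re p * \<tau> * h')\<^sup>2 \<le> 1"
      unfolding rx by (simp add: algebra_simps)
  qed
qed

lemma half:
  assumes s0: "s > 0" and sub: "placed_square s c \<theta> \<subseteq> cball 0 1"
    and a0: "a \<noteq> 0" and pos: "\<forall>x\<in>obox s c \<theta>. inner a x \<ge> 0"
  shows "5*(s/2)\<^sup>2 \<le> 1"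
proof (rule ccontr)
  define h where "h = s/2"
  assume "\<not> 5*(s/2)\<^sup>2 \<le> 1"
  hence g: "5*h\<^sup>2 > 1" by (simp add: h_def)
  have h0: "h > 0" using s0 by (simp add: h_def)
  define \<delta> where "\<delta> = (5*h\<^sup>2 - 1) / (10*h)"
  have d0: "\<delta> > 0" using g h0 by (simp add: \<delta>_def)
  have dh: "\<delta> < h" using h0 g by (simp add: \<delta>_def field_simps power2_eq_square)
  have "5*(h-\<delta>)\<^sup>2 \<le> 1"
    by (rule half_fixed[OF _ _ sub a0 pos]) (use d0 dh in \<open>auto simp: h_def\<close>)
  moreover have "5*(h-\<delta>)\<^sup>2 = 1 + 5*\<delta>\<^sup>2"
    using h0 by (simp add: \<delta>_def field_simps power2_eq_square)
  ultimately show False using d0 by (smt (verit) zero_less_power2)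
qed

lemma obox_eq: "obox s c \<theta> = (\<lambda>z. cnj (cis \<theta>) * (z - c)) -` box (Complex (-s/2) (-s/2)) (Complex (s/2) (s/2))"
proof -
  have mb: "z \<in> box (Complex (-s/2) (-s/2)) (Complex (s/2) (s/2)) \<longleftrightarrow> \<bar>Re z\<bar> < s/2 \<and> \<bar>Im z\<bar> < s/2" for z
    by (auto simp: mem_box Basis_complex_def)
  have w: "cnj (cis \<theta>) * cis \<theta> = 1" by (simp add: cis_cnj cis_mult)
  show ?thesis
  proof (intro set_eqI iffI)
    fix z assume "z \<in> obox s c \<theta>"
    then obtain u v where z: "z = c + cis \<theta> * Complex u v" "\<bar>u\<bar> < s/2" "\<bar>v\<bar> < s/2"
      unfolding obox_def by auto
    have eq: "cnj (cis \<theta>) * (z - c) = Complex u v" using w unfolding z(1)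
      by (metis add_diff_cancel_left' mult.assoc mult_1)
    have "Complex u v \<in> box (Complex (-s/2) (-s/2)) (Complex (s/2) (s/2))"
      using z mb by simp
    thus "z \<in> (\<lambda>z. cnj (cis \<theta>) * (z - c)) -` box (Complex (-s/2) (-s/2)) (Complex (s/2) (s/2))"
      unfolding vimage_def mem_Collect_eq eq .
  next
    fix z assume "z \<in> (\<lambda>z. cnj (cis \<theta>) * (z - c)) -` box (Complex (-s/2) (-s/2)) (Complex (s/2) (s/2))"
    hence m: "\<bar>Re (cnj (cis \<theta>) * (z - c))\<bar> < s/2 \<and> \<bar>Im (cnj (cis \<theta>) * (z - c))\<bar> < s/2"
      using mb by simp
    have "z = c + cis \<theta> * (cnj (cis \<theta>) * (z - c))"
      using w by (simp add: mult.assoc[symmetric] mult.commute[of "cis \<theta>"])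
    also have "\<dots> = c + cis \<theta> * Complex (Re (cnj (cis \<theta>) * (z - c))) (Im (cnj (cis \<theta>) * (z - c)))"
      by (simp only: complex_surj)
    finally show "z \<in> obox s c \<theta>" unfolding obox_def using m by blast
  qed
qed

lemma obox_open: "open (obox s c \<theta>)"
  unfolding obox_eq by (intro continuous_open_vimage open_box) (intro continuous_intros)

lemma obox_sub: "obox s c \<theta> \<subseteq> interior (placed_square s c \<theta>)"
proof (rule interior_maximal[OF _ obox_open])
  show "obox s c \<theta> \<subseteq> placed_square s c \<theta>"
    unfolding obox_def placed_square_def by fastforce
qed

lemma obox_convex: "convex (obox s c \<theta>)"
proof -
  have "obox s c \<theta> = (+) c ` ((*) (cis \<theta>) ` box (Complex (-s/2) (-s/2)) (Complex (s/2) (s/2)))"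
  proof (intro set_eqI iffI)
    fix z assume "z \<in> obox s c \<theta>"
    then obtain u v where z: "z = c + cis \<theta> * Complex u v" "\<bar>u\<bar> < s/2" "\<bar>v\<bar> < s/2"
      unfolding obox_def by auto
    show "z \<in> (+) c ` ((*) (cis \<theta>) ` box (Complex (-s/2) (-s/2)) (Complex (s/2) (s/2)))"
      unfolding z(1) using z(2,3)
      by (intro image_eqI[of _ _ "cis \<theta> * Complex u v"] image_eqI[of _ _ "Complex u v"])
         (auto simp: mem_box Basis_complex_def)
  next
    fix z assume "z \<in> (+) c ` ((*) (cis \<theta>) ` box (Complex (-s/2) (-s/2)) (Complex (s/2) (s/2)))"
    then obtain y where y: "y \<in> box (Complex (-s/2) (-s/2)) (Complex (s/2) (s/2))" "z = c + cis \<theta> * y"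
      by auto
    have "\<bar>Re y\<bar> < s/2" "\<bar>Im y\<bar> < s/2" using y(1) by (auto simp: mem_box Basis_complex_def)
    moreover have "z = c + cis \<theta> * Complex (Re y) (Im y)" using y(2) by simp
    ultimately show "z \<in> obox s c \<theta>" unfolding obox_def by blast
  qed
  thus ?thesis by (simp add: convex_translation convex_linear_image linear_times convex_box)
qed

lemma obox_ne: "s > 0 \<Longrightarrow> c \<in> obox s c \<theta>"
  unfolding obox_def by (intro CollectI exI[of _ 0]) (auto simp: complex_eq_iff)

theorem lemma2:
  fixes \<epsilon> :: real
  assumes "\<epsilon> > 0"
  shows "\<exists>ss :: real list. (\<forall>s \<in> set ss. s > 0) \<and>
           total_area ss = 8 / 5 + \<epsilon> \<and> \<not> packs_into ss (cball 0 1)"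
proof -
  define s where "s = sqrt (4/5 + \<epsilon>/2)"
  have s0: "s > 0" using assms by (simp add: s_def)
  have s2: "s\<^sup>2 = 4/5 + \<epsilon>/2" using assms by (simp add: s_def)
  have big: "\<not> 5*(s/2)\<^sup>2 \<le> 1" using s2 assms by (simp add: power_divide)
  have "\<not> packs_into [s, s] (cball 0 1)"
  proof
    assume "packs_into [s, s] (cball 0 1)"
    then obtain c \<theta> where
      P1: "\<forall>i < length [s,s]. placed_square ([s,s] ! i) (c i) (\<theta> i) \<subseteq> cball 0 1" and
      P2: "\<forall>i < length [s,s]. \<forall>j < length [s,s]. i \<noteq> j \<longrightarrow>
            interior (placed_square ([s,s] ! i) (c i) (\<theta> i)) \<inter>
            interior (placed_square ([s,s] ! j) (c j) (\<theta> j)) = {}"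
      unfolding packs_into_def by blast
    have sub: "placed_square s (c i) (\<theta> i) \<subseteq> cball 0 1" if "i < 2" for i :: nat
    proof -
      have "i = 0 \<or> i = 1" using that by auto
      hence "[s,s] ! i = s" by auto
      moreover have "placed_square ([s,s] ! i) (c i) (\<theta> i) \<subseteq> cball 0 1" using P1 that by simp
      ultimately show ?thesis by simp
    qed
    have dj: "interior (placed_square s (c 0) (\<theta> 0)) \<inter> interior (placed_square s (c 1) (\<theta> 1)) = {}"
      using P2[rule_format, of 0 1] by simp
    have "obox s (c 0) (\<theta> 0) \<inter> obox s (c 1) (\<theta> 1) = {}"
      using dj obox_sub by blast
    then obtain a b where a0: "a \<noteq> 0" and
      L: "\<forall>x\<in>obox s (c 0) (\<theta> 0). inner a x \<le> b" and R: "\<forall>x\<in>obox s (c 1) (\<theta> 1). inner a x \<ge> b"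
      using separating_hyperplane_sets[OF obox_convex obox_convex] obox_ne[OF s0] by blast
    show False
    proof (cases "b \<ge> 0")
      case True
      have "\<forall>x\<in>obox s (c 1) (\<theta> 1). inner a x \<ge> 0" using R True by force
      from half[OF s0 sub[of 1] a0 this] big show False by simp
    next
      case False
      have "\<forall>x\<in>obox s (c 0) (\<theta> 0). inner (-a) x \<ge> 0" using L False by force
      from half[OF s0 sub[of 0] _ this] a0 big show False by simp
    qed
  qed
  moreover have "total_area [s, s] = 8/5 + \<epsilon>" unfolding total_area_def using s2 by simp
  ultimately show ?thesis using s0 by (intro exI[of _ "[s, s]"]) auto
qed

end
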